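(* Let $A\in\mathbb{Z}^{d\times n}$ be totally unimodular, $\mathbf{b}\in\mathbb{Z}^d$, $\mathbf{c}\in\mathbb{Z}^n$, $\mathbf{u}\in\mathbb{Z}_{\ge0}^n$. Then from any feasible solution of $\min\{\mathbf{c}^\top\mathbf{x} : A\mathbf{x}=\mathbf{b},\ \mathbf{0}\le\mathbf{x}\le\mathbf{u},\ \mathbf{x}\in\mathbb{Z}^n\}$, every sequence of discrete steepest-descent augmentations reaches an optimal solution after at most $n(d+1)\|\mathbf{c}\|_1$ augmentations.
   Context: For $\mathbf{v},\mathbf{w}\in\mathbb{R}^n$ write $\mathbf{v}\sqsubseteq\mathbf{w}$ if $v_iw_i\ge0$ and $|v_i|\le|w_i|$ for all $i$; the Graver basis $\mathcal{G}(A)$ is the set of $\sqsubseteq$-minimal elements of $(\ker(A)\cap\mathbb{Z}^n)\setminus\{\mathbf{0}\}$. Discrete steepest-descent augmentation (ILP): given a feasible $\mathbf{x}_k$, choose $\mathbf{z}\in\mathcal{G}(A)$ maximizing $-\mathbf{c}^\top\mathbf{z}/\|\mathbf{z}\|_1$ among all $\mathbf{z}\in\mathcal{G}(A)$ with $\mathbf{x}_k+\mathbf{z}$ feasible; if this maximum is positive, let $\alpha$ be the largest integer with $\mathbf{x}_k+\alpha\mathbf{z}$ feasible and set $\mathbf{x}_{k+1}:=\mathbf{x}_k+\alpha\mathbf{z}$, otherwise stop. *)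

theory Defs
  imports Complex_Main "Jordan_Normal_Form.Determinant" "Jordan_Normal_Form.DL_Submatrix"
begin

(* A is d x n with d = dim_row A, n = dim_col A. *)

definition totally_unimodular :: "int mat \<Rightarrow> bool" where
  "totally_unimodular A \<longleftrightarrow>
     (\<forall>I J. I \<subseteq> {..<dim_row A} \<longrightarrow> J \<subseteq> {..<dim_col A} \<longrightarrow> card I = card J \<longrightarrow>
        det (submatrix A I J) \<in> {-1, 0, 1})"

definition conf_le :: "int vec \<Rightarrow> int vec \<Rightarrow> bool" (infix "\<sqsubseteq>" 50) where
  "v \<sqsubseteq> w \<longleftrightarrow> dim_vec v = dim_vec w \<and>
     (\<forall>i<dim_vec v. v $ i * w $ i \<ge> 0 \<and> \<bar>v $ i\<bar> \<le> \<bar>w $ i\<bar>)"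

definition int_kernel :: "int mat \<Rightarrow> int vec set" where
  "int_kernel A = {z. z \<in> carrier_vec (dim_col A) \<and> A *\<^sub>v z = 0\<^sub>v (dim_row A)}"

definition graver :: "int mat \<Rightarrow> int vec set" where
  "graver A = {z \<in> int_kernel A - {0\<^sub>v (dim_col A)}.
      \<not> (\<exists>y \<in> int_kernel A - {0\<^sub>v (dim_col A)}. y \<sqsubseteq> z \<and> y \<noteq> z)}"

definition feasible :: "int mat \<Rightarrow> int vec \<Rightarrow> int vec \<Rightarrow> int vec \<Rightarrow> bool" where
  "feasible A b u x \<longleftrightarrow> x \<in> carrier_vec (dim_col A) \<and> A *\<^sub>v x = b \<and>
     (\<forall>i<dim_col A. 0 \<le> x $ i \<and> x $ i \<le> u $ i)"

definition norm1 :: "int vec \<Rightarrow> int" where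
  "norm1 v = (\<Sum>i<dim_vec v. \<bar>v $ i\<bar>)"

definition ratio :: "int vec \<Rightarrow> int vec \<Rightarrow> real" where
  "ratio c z = - real_of_int (c \<bullet> z) / real_of_int (norm1 z)"

definition sd_step :: "int mat \<Rightarrow> int vec \<Rightarrow> int vec \<Rightarrow> int vec \<Rightarrow> int vec \<Rightarrow> int vec \<Rightarrow> bool" where
  "sd_step A b c u x x' \<longleftrightarrow>
     (\<exists>z \<alpha>. z \<in> graver A \<and> feasible A b u (x + z) \<and>
        (\<forall>z' \<in> graver A. feasible A b u (x + z') \<longrightarrow> ratio c z' \<le> ratio c z) \<and>
        ratio c z > 0 \<and>
        feasible A b u (x + \<alpha> \<cdot>\<^sub>v z) \<and>
        (\<forall>\<beta>::int. feasible A b u (x + \<beta> \<cdot>\<^sub>v z) \<longrightarrow> \<beta> \<le> \<alpha>) \<and>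
        x' = x + \<alpha> \<cdot>\<^sub>v z)"

definition sd_stops :: "int mat \<Rightarrow> int vec \<Rightarrow> int vec \<Rightarrow> int vec \<Rightarrow> int vec \<Rightarrow> bool" where
  "sd_stops A b c u x \<longleftrightarrow>
     \<not> (\<exists>z \<in> graver A. feasible A b u (x + z) \<and> ratio c z > 0)"

definition optimal :: "int mat \<Rightarrow> int vec \<Rightarrow> int vec \<Rightarrow> int vec \<Rightarrow> int vec \<Rightarrow> bool" where
  "optimal A b c u x \<longleftrightarrow> feasible A b u x \<and> (\<forall>y. feasible A b u y \<longrightarrow> c \<bullet> x \<le> c \<bullet> y)"

end

theory Submission
  imports Defs
begin


lemma conf_refl: "v \<sqsubseteq> v" by (auto simp: conf_le_def)

lemma conf_trans: assumes "x \<sqsubseteq> y" "y \<sqsubseteq> z" shows "x \<sqsubseteq> z"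
  unfolding conf_le_def
proof (intro conjI allI impI)
  show "dim_vec x = dim_vec z" using assms by (auto simp: conf_le_def)
  fix i assume i: "i < dim_vec x"
  have a: "x$i * y$i \<ge> 0" "\<bar>x$i\<bar> \<le> \<bar>y$i\<bar>" using assms i by (auto simp: conf_le_def)
  have b: "y$i * z$i \<ge> 0" "\<bar>y$i\<bar> \<le> \<bar>z$i\<bar>" using assms i by (auto simp: conf_le_def)
  show "\<bar>x$i\<bar> \<le> \<bar>z$i\<bar>" using a b by linarith
  show "0 \<le> x $ i * z $ i" using a b
    by (cases "x$i" "0::int" rule: linorder_cases; cases "y$i" "0::int" rule: linorder_cases;
        cases "z$i" "0::int" rule: linorder_cases; auto simp: mult_less_0_iff zero_le_mult_iff)
qed

lemma norm1_nonneg: "norm1 v \<ge> 0" by (auto simp: norm1_def intro: sum_nonneg)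

lemma norm1_pos: assumes "v \<in> carrier_vec n" "v \<noteq> 0\<^sub>v n" shows "norm1 v > 0"
proof -
  obtain i where i: "i < n" "v$i \<noteq> 0" using assms by (metis eq_vecI carrier_vecD index_zero_vec)
  have "norm1 v = (\<Sum>j<n. \<bar>v$j\<bar>)" using assms by (simp add: norm1_def)
  moreover have "(\<Sum>j<n. \<bar>v$j\<bar>) > 0"
    using i by (intro sum_pos2[of _ i]) auto
  ultimately show ?thesis by simp
qed

lemma conf_norm_less: assumes "y \<sqsubseteq> w" "y \<noteq> w" shows "norm1 y < norm1 w"
proof -
  have d: "dim_vec y = dim_vec w" using assms by (auto simp: conf_le_def)
  obtain i where i: "i < dim_vec w" "y$i \<noteq> w$i" using assms d by (metis eq_vecI)
  have c: "\<And>j. j < dim_vec w \<Longrightarrow> y$j * w$j \<ge> 0 \<and> \<bar>y$j\<bar> \<le> \<bar>w$j\<bar>" using assms d by (auto simp: conf_le_def)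
  have "\<bar>y$i\<bar> < \<bar>w$i\<bar>" using c[OF i(1)] i(2)
    by (cases "y$i" "0::int" rule: linorder_cases; cases "w$i" "0::int" rule: linorder_cases;
        auto simp: mult_less_0_iff zero_le_mult_iff)
  then have "(\<Sum>j<dim_vec w. \<bar>y$j\<bar>) < (\<Sum>j<dim_vec w. \<bar>w$j\<bar>)"
    using c i by (intro sum_strict_mono_ex1) auto
  then show ?thesis using d by (simp add: norm1_def)
qed

lemma conf_diff: assumes "g \<sqsubseteq> w"
  shows "(w - g) \<sqsubseteq> w" "norm1 (w - g) = norm1 w - norm1 g"
proof -
  have d: "dim_vec g = dim_vec w" using assms by (auto simp: conf_le_def)
  have c: "\<And>j. j < dim_vec w \<Longrightarrow> g$j * w$j \<ge> 0 \<and> \<bar>g$j\<bar> \<le> \<bar>w$j\<bar>" using assms d by (auto simp: conf_le_def)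
  have e: "\<And>j. j < dim_vec w \<Longrightarrow> \<bar>w$j - g$j\<bar> = \<bar>w$j\<bar> - \<bar>g$j\<bar> \<and> (w$j - g$j) * w$j \<ge> 0"
  proof -
    fix j assume j: "j < dim_vec w"
    show "\<bar>w$j - g$j\<bar> = \<bar>w$j\<bar> - \<bar>g$j\<bar> \<and> (w$j - g$j) * w$j \<ge> 0" using c[OF j]
      by (cases "g$j" "0::int" rule: linorder_cases; cases "w$j" "0::int" rule: linorder_cases;
        auto simp: mult_less_0_iff zero_le_mult_iff)
  qed
  show "(w - g) \<sqsubseteq> w" using e d by (auto simp: conf_le_def)
  have "norm1 (w - g) = (\<Sum>j<dim_vec w. \<bar>w$j\<bar> - \<bar>g$j\<bar>)" using e d
    by (auto simp: norm1_def intro!: sum.cong)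
  also have "\<dots> = norm1 w - norm1 g" using d by (simp add: norm1_def sum_subtractf)
  finally show "norm1 (w - g) = norm1 w - norm1 g" .
qed

lemma kernel_diff: assumes "w \<in> int_kernel A" "g \<in> int_kernel A" shows "w - g \<in> int_kernel A"
proof -
  have A: "A \<in> carrier_mat (dim_row A) (dim_col A)" by auto
  have w: "w \<in> carrier_vec (dim_col A)" and g: "g \<in> carrier_vec (dim_col A)" using assms by (auto simp: int_kernel_def)
  have "A *\<^sub>v (w - g) = A *\<^sub>v w - A *\<^sub>v g" using mult_minus_distrib_mat_vec[OF A w g] .
  then show ?thesis using assms by (auto simp: int_kernel_def)
qed

lemma graver_exists: assumes "w \<in> int_kernel A" "w \<noteq> 0\<^sub>v (dim_col A)"
  shows "\<exists>g\<in>graver A. g \<sqsubseteq> w"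
  using assms
proof (induction "nat (norm1 w)" arbitrary: w rule: less_induct)
  case less
  show ?case
  proof (cases "w \<in> graver A")
    case True then show ?thesis using conf_refl by blast
  next
    case False
    then obtain y where y: "y \<in> int_kernel A" "y \<noteq> 0\<^sub>v (dim_col A)" "y \<sqsubseteq> w" "y \<noteq> w"
      using less.prems unfolding graver_def by blast
    have "norm1 y < norm1 w" using conf_norm_less y by blast
    then have "nat (norm1 y) < nat (norm1 w)" using norm1_nonneg[of y] by linarith
    from less.hyps[OF this y(1,2)] obtain g where "g \<in> graver A" "g \<sqsubseteq> y" by blast
    then show ?thesis using conf_trans y(3) by blast
  qed
qed

lemma graver_kernel: "g \<in> graver A \<Longrightarrow> g \<in> int_kernel A \<and> g \<noteq> 0\<^sub>v (dim_col A)"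
  by (auto simp: graver_def)

lemma decomp_bound:
  assumes "w \<in> int_kernel A" "r \<ge> 0" "c \<in> carrier_vec (dim_col A)"
    and "\<forall>g\<in>graver A. g \<sqsubseteq> w \<longrightarrow> - real_of_int (c \<bullet> g) \<le> r * real_of_int (norm1 g)"
  shows "- real_of_int (c \<bullet> w) \<le> r * real_of_int (norm1 w)"
  using assms
proof (induction "nat (norm1 w)" arbitrary: w rule: less_induct)
  case less
  show ?case
  proof (cases "w = 0\<^sub>v (dim_col A)")
    case True then show ?thesis using less.prems by (simp add: norm1_def)
  next
    case False
    from graver_exists[OF less.prems(1) False] obtain g where g: "g \<in> graver A" "g \<sqsubseteq> w" by blast
    have gk: "g \<in> int_kernel A" "g \<noteq> 0\<^sub>v (dim_col A)" using graver_kernel[OF g(1)] by auto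
    have gc: "g \<in> carrier_vec (dim_col A)" and wc: "w \<in> carrier_vec (dim_col A)"
      using gk less.prems by (auto simp: int_kernel_def)
    have ng: "norm1 g > 0" using norm1_pos gc gk by blast
    have wg: "(w - g) \<sqsubseteq> w" "norm1 (w - g) = norm1 w - norm1 g" using conf_diff[OF g(2)] by auto
    have "nat (norm1 (w - g)) < nat (norm1 w)" using wg ng norm1_nonneg[of "w-g"] by linarith
    from less.hyps[OF this kernel_diff[OF less.prems(1) gk(1)] less.prems(2,3)]
    have ih: "- real_of_int (c \<bullet> (w - g)) \<le> r * real_of_int (norm1 (w - g))"
      using less.prems(4) conf_trans[OF _ wg(1)] by blast
    have hg: "- real_of_int (c \<bullet> g) \<le> r * real_of_int (norm1 g)" using less.prems(4) g by blast
    have "c \<bullet> (w - g) = c \<bullet> w - c \<bullet> g" using scalar_prod_minus_distrib[OF less.prems(3) wc gc] .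
    then show ?thesis using ih hg wg(2) by (simp add: algebra_simps)
  qed
qed



declare pick.simps[simp del]

lemma pick_bij: assumes "finite S" shows "bij_betw (pick S) {..<card S} S"
proof -
  have inj: "inj_on (pick S) {..<card S}"
  proof (rule inj_onI)
    fix x y assume xy: "x \<in> {..<card S}" "y \<in> {..<card S}" "pick S x = pick S y"
    show "x = y"
    proof (rule ccontr)
      assume "x \<noteq> y"
      then consider "x < y" | "y < x" by linarith
      then show False
      proof cases
        case 1
        have "y < card S" using xy(2) by simp
        then have "pick S x < pick S y" using pick_mono[of y S x] 1 by blast
        then show False using xy(3) by simp
      next
        case 2
        have "x < card S" using xy(1) by simp
        then have "pick S y < pick S x" using pick_mono[of x S y] 2 by blast
        then show False using xy(3) by simp
      qed
    qed
  qed
  have "pick S ` {..<card S} = S"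
  proof
    show "pick S ` {..<card S} \<subseteq> S"
    proof
      fix x assume "x \<in> pick S ` {..<card S}"
      then obtain m where "m < card S" "x = pick S m" by blast
      then show "x \<in> S" using pick_in_set by blast
    qed
    show "S \<subseteq> pick S ` {..<card S}"
    proof
      fix s assume s: "s \<in> S"
      have "{a\<in>S. a < s} \<subset> S" using s by auto
      then have "card {a\<in>S. a < s} < card S" using assms by (intro psubset_card_mono)
      moreover have "pick S (card {a\<in>S. a < s}) = s" using pick_card_in_set[OF s] .
      ultimately show "s \<in> pick S ` {..<card S}" by (intro rev_image_eqI[of "card {a\<in>S. a < s}"]) simp_all
    qed
  qed
  then show ?thesis using inj by (simp add: bij_betw_def)
qed

lemma sum_pick: assumes "finite S" shows "(\<Sum>c<card S. f (pick S c)) = (\<Sum>l\<in>S. f l)"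
  using sum.reindex_bij_betw[OF pick_bij[OF assms]] .

lemma pick_delete: assumes J: "finite J" and c: "c < card J" and c': "c' < card J - 1"
  shows "pick (J - {pick J c}) c' = pick J (if c' < c then c' else Suc c')"
proof -
  define p where "p = pick J c"
  define e where "e = pick J (if c' < c then c' else Suc c')"
  have pJ: "p \<in> J" using pick_in_set c by (simp add: p_def)
  have "(if c' < c then c' else Suc c') < card J" using c c' by auto
  then have eJ: "e \<in> J" unfolding e_def using pick_in_set by blast
  show ?thesis
  proof (cases "c' < c")
    case True
    then have ep: "e < p" using pick_mono[of c J c'] c by (simp add: e_def p_def)
    have "{a\<in>J - {p}. a < e} = {a\<in>J. a < e}" using ep by auto
    then have "card {a\<in>J - {p}. a < e} = c'" using card_pick[of c' J] True c by (simp add: e_def)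
    moreover have "e \<in> J - {p}" using eJ ep by auto
    ultimately have "pick (J - {p}) c' = e" using pick_card_in_set[of e "J - {p}"] by simp
    then show ?thesis using True by (simp add: p_def e_def)
  next
    case False
    have sc: "Suc c' < card J" using c' by linarith
    then have pe: "p < e" using pick_mono[of "Suc c'" J c] False by (simp add: e_def p_def)
    have "{a\<in>J - {p}. a < e} = {a\<in>J. a < e} - {p}" by auto
    moreover have "p \<in> {a\<in>J. a < e}" using pJ pe by auto
    moreover have "card {a\<in>J. a < e} = Suc c'" using card_pick[of "Suc c'" J] sc False by (simp add: e_def)
    ultimately have "card {a\<in>J - {p}. a < e} = c'" using J by simp
    moreover have "e \<in> J - {p}" using eJ pe by auto
    ultimately have "pick (J - {p}) c' = e" using pick_card_in_set[of e "J - {p}"] by simp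
    then show ?thesis using False by (simp add: p_def e_def)
  qed
qed

lemma subm: assumes "I \<subseteq> {..<dim_row A}" "J \<subseteq> {..<dim_col A}"
  shows "submatrix A I J \<in> carrier_mat (card I) (card J)"
    and "r < card I \<Longrightarrow> c < card J \<Longrightarrow> submatrix A I J $$ (r,c) = A $$ (pick I r, pick J c)"
proof -
  have e1: "{i. i < dim_row A \<and> i \<in> I} = I" using assms(1) by blast
  have e2: "{j. j < dim_col A \<and> j \<in> J} = J" using assms(2) by blast
  show "submatrix A I J \<in> carrier_mat (card I) (card J)"
    unfolding carrier_mat_def using dim_submatrix[of A I J] unfolding e1 e2 by simp
  assume rc: "r < card I" "c < card J"
  show "submatrix A I J $$ (r,c) = A $$ (pick I r, pick J c)"
    by (rule submatrix_index) (use rc e1 e2 in simp_all)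
qed

lemma mv_index: assumes "M \<in> carrier_mat m k" "y \<in> carrier_vec k" "r < m"
  shows "(M *\<^sub>v y) $ r = (\<Sum>c<k. M $$ (r,c) * y $ c)"
  using assms by (simp add: scalar_prod_def atLeast0LessThan)



lemma mulz_index: assumes "A \<in> carrier_mat d n" "z \<in> carrier_vec n" "i < d"
  shows "(A *\<^sub>v z) $ i = (\<Sum>l<n. A $$ (i,l) * z $ l)"
  using mv_index[OF assms] .

lemma TU1:
  assumes A: "A \<in> carrier_mat d n" and tu: "totally_unimodular A" and zc: "z \<in> carrier_vec n"
    and Az: "A *\<^sub>v z = 0\<^sub>v d" and z0: "z \<noteq> 0\<^sub>v n"
  shows "\<exists>w \<in> carrier_vec n. A *\<^sub>v w = 0\<^sub>v d \<and> w \<noteq> 0\<^sub>v n \<and> (\<forall>i<n. w $ i \<in> {-1,0,1}) \<and>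
     (\<forall>i<n. z $ i = 0 \<longrightarrow> w $ i = 0) \<and> card {i. i < n \<and> w $ i \<noteq> 0} \<le> d + 1"
proof -
  have dA: "dim_row A = d" "dim_col A = n" using A by auto
  have tuI: "\<And>I J. I \<subseteq> {..<dim_row A} \<Longrightarrow> J \<subseteq> {..<dim_col A} \<Longrightarrow> card I = card J \<Longrightarrow> det (submatrix A I J) \<in> {-1,0,1}"
    using tu unfolding totally_unimodular_def by blast
  define S where "S = {i. i < n \<and> z $ i \<noteq> 0}"
  have Sn: "S \<subseteq> {..<n}" and fS: "finite S" by (auto simp: S_def)
  define P where "P I J \<longleftrightarrow> I \<subseteq> {..<d} \<and> J \<subseteq> S \<and> card I = card J \<and> det (submatrix A I J) \<noteq> 0" for I J
  have P0: "P {} {}"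
  proof -
    have "submatrix A {} {} \<in> carrier_mat 0 0" using subm(1)[of "{}" A "{}"] by simp
    then show ?thesis unfolding P_def by simp
  qed
  have bnd: "\<And>I J. P I J \<Longrightarrow> card J \<le> d"
  proof -
    fix I J assume "P I J"
    then have "I \<subseteq> {..<d}" "card I = card J" by (auto simp: P_def)
    then show "card J \<le> d" using card_mono[of "{..<d}" I] by simp
  qed
  define K where "K = {card J | I J. P I J}"
  have "K \<subseteq> {..d}"
  proof
    fix x assume "x \<in> K"
    then obtain I J where "x = card J" "P I J" unfolding K_def by blast
    then show "x \<in> {..d}" using bnd by simp
  qed
  then have Kf: "finite K" using finite_subset by blast
  have K0: "0 \<in> K" using P0 unfolding K_def by force
  obtain I J where PIJ: "P I J" and Jmax: "card J = Max K"
  proof -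
    have "Max K \<in> K" using Kf K0 by (intro Max_in) auto
    then obtain I0 J0 where "Max K = card J0" "P I0 J0" unfolding K_def by blast
    then show ?thesis using that[of I0 J0] by simp
  qed
  have max: "\<And>I' J'. P I' J' \<Longrightarrow> card J' \<le> card J"
  proof -
    fix I' J' assume "P I' J'"
    then have "card J' \<in> K" unfolding K_def by blast
    then show "card J' \<le> card J" unfolding Jmax using Kf by (rule Max_ge[rotated])
  qed
  have Id: "I \<subseteq> {..<d}" and JS: "J \<subseteq> S" and cIJ: "card I = card J" and dIJ: "det (submatrix A I J) \<noteq> 0"
    using PIJ by (auto simp: P_def)
  have fI: "finite I" using Id finite_subset by blast
  have fJ: "finite J" using JS fS finite_subset by blast
  define k where "k = card J"
  have IdA: "I \<subseteq> {..<dim_row A}" using Id dA by simp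
  have JnA: "J \<subseteq> {..<dim_col A}" using JS Sn dA by auto
  have notSJ: "\<not> S \<subseteq> J"
  proof
    assume SJ: "S \<subseteq> J"
    then have JeS: "J = S" using JS by auto
    obtain i0 where i0: "i0 < n" "z $ i0 \<noteq> 0" using z0 zc by (metis eq_vecI carrier_vecD index_zero_vec)
    have i0S: "i0 \<in> S" using i0 by (simp add: S_def)
    then have kpos: "k > 0" using fS unfolding k_def JeS card_gt_0_iff by blast
    define M where "M = submatrix A I J"
    have Mc: "M \<in> carrier_mat k k" using subm(1)[OF IdA JnA] cIJ by (simp add: M_def k_def)
    define y where "y = vec k (\<lambda>c. z $ pick S c)"
    have yc: "y \<in> carrier_vec k" by (simp add: y_def)
    have y0: "y \<noteq> 0\<^sub>v k"
    proof
      assume "y = 0\<^sub>v k"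
      then have "y $ 0 = 0" using kpos by simp
      moreover have "pick S 0 \<in> S" using pick_in_set[of 0 S] kpos by (simp add: k_def JeS)
      ultimately show False using kpos by (simp add: y_def S_def)
    qed
    have My: "M *\<^sub>v y = 0\<^sub>v k"
    proof (rule eq_vecI)
      show "dim_vec (M *\<^sub>v y) = dim_vec (0\<^sub>v k)" using Mc by simp
      fix r assume "r < dim_vec (0\<^sub>v k)"
      then have r: "r < k" by simp
      have pIr: "pick I r < d" using pick_in_set[of r I] r cIJ Id by (auto simp: k_def)
      have "(M *\<^sub>v y) $ r = (\<Sum>c<k. M $$ (r,c) * y $ c)" using mv_index[OF Mc yc r] .
      also have "\<dots> = (\<Sum>c<card S. A $$ (pick I r, pick S c) * z $ pick S c)"
        using subm(2)[OF IdA JnA] r cIJ by (intro sum.cong) (auto simp: M_def y_def k_def JeS)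
      also have "\<dots> = (\<Sum>l\<in>S. A $$ (pick I r, l) * z $ l)" using sum_pick[OF fS] .
      also have "\<dots> = (\<Sum>l<n. A $$ (pick I r, l) * z $ l)"
        by (rule sum.mono_neutral_left) (auto simp: S_def)
      also have "\<dots> = (A *\<^sub>v z) $ pick I r" using mulz_index[OF A zc pIr] by simp
      also have "\<dots> = 0" using Az pIr by simp
      finally show "(M *\<^sub>v y) $ r = 0\<^sub>v k $ r" using r by simp
    qed
    have "det M = 0" using det_0_iff_vec_prod_zero[OF Mc] yc y0 My by blast
    then show False using dIJ by (simp add: M_def)
  qed
  then obtain j where jS: "j \<in> S" and jJ: "j \<notin> J" by blast
  define J' where "J' = insert j J"
  have fJ': "finite J'" using fJ by (simp add: J'_def)
  have cJ': "card J' = Suc k" using fJ jJ by (simp add: J'_def k_def)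
  have J'S: "J' \<subseteq> S" using jS JS by (simp add: J'_def)
  have J'nA: "J' \<subseteq> {..<dim_col A}" using J'S Sn dA by auto
  have cI: "card I = k" using cIJ by (simp add: k_def)
  define w where "w = vec n (\<lambda>l. if l \<in> J' then (-1)^(card {a\<in>J'. a < l}) * det (submatrix A I (J' - {l})) else 0)"
  have wc: "w \<in> carrier_vec n" by (simp add: w_def)
  have detJl: "\<And>l. l \<in> J' \<Longrightarrow> det (submatrix A I (J' - {l})) \<in> {-1,0,1}"
  proof -
    fix l assume l: "l \<in> J'"
    have "card (J' - {l}) = card I" using l fJ' cJ' cI by simp
    moreover have "J' - {l} \<subseteq> {..<dim_col A}" using J'nA by auto
    ultimately show "det (submatrix A I (J' - {l})) \<in> {-1,0,1}"
      using tuI[OF IdA] by simp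
  qed
  have wunit: "\<forall>i<n. w $ i \<in> {-1,0,1}"
  proof (intro allI impI)
    fix i assume i: "i < n"
    show "w $ i \<in> {-1,0,1}"
    proof (cases "i \<in> J'")
      case True
      have "(-1::int)^(card {a\<in>J'. a < i}) \<in> {-1,1}" by (cases "even (card {a\<in>J'. a < i})") auto
      then show ?thesis using detJl[OF True] i True by (auto simp: w_def)
    next
      case False then show ?thesis using i by (simp add: w_def)
    qed
  qed
  have wj: "w $ j \<noteq> 0"
  proof -
    have jn: "j < n" using jS by (simp add: S_def)
    have "J' - {j} = J" using jJ by (auto simp: J'_def)
    then show ?thesis using jn dIJ by (simp add: w_def J'_def)
  qed
  have jn: "j < n" using jS by (simp add: S_def)
  have w0: "w \<noteq> 0\<^sub>v n" using wj jn by auto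
  have wsupp: "\<forall>i<n. z $ i = 0 \<longrightarrow> w $ i = 0"
  proof (intro allI impI)
    fix i assume i: "i < n" "z $ i = 0"
    then have "i \<notin> J'" using J'S by (auto simp: S_def)
    then show "w $ i = 0" using i by (simp add: w_def)
  qed
  have wcard: "card {i. i < n \<and> w $ i \<noteq> 0} \<le> d + 1"
  proof -
    have "{i. i < n \<and> w $ i \<noteq> 0} \<subseteq> J'" by (auto simp: w_def split: if_splits)
    then have "card {i. i < n \<and> w $ i \<noteq> 0} \<le> card J'" using fJ' by (rule card_mono[rotated])
    moreover have "k \<le> d" using bnd[OF PIJ] by (simp add: k_def)
    ultimately show ?thesis using cJ' by simp
  qed
  have Aw: "A *\<^sub>v w = 0\<^sub>v d"
  proof (rule eq_vecI)
    show "dim_vec (A *\<^sub>v w) = dim_vec (0\<^sub>v d)" using A by simp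
    fix i assume "i < dim_vec (0\<^sub>v d)"
    then have i: "i < d" by simp
    define B where "B = mat (Suc k) (Suc k) (\<lambda>(r,c). if r = 0 then A $$ (i, pick J' c) else A $$ (pick I (r - 1), pick J' c))"
    have Bc: "B \<in> carrier_mat (Suc k) (Suc k)" by (simp add: B_def)
    have Bidx: "\<And>r c. r < Suc k \<Longrightarrow> c < Suc k \<Longrightarrow> B $$ (r,c) = A $$ (if r = 0 then i else pick I (r - 1), pick J' c)"
      by (simp add: B_def)
    have detB: "det B = 0"
    proof (cases "i \<in> I")
      case True
      define r0 where "r0 = card {a\<in>I. a < i}"
      have "{a\<in>I. a < i} \<subset> I" using True by auto
      then have r0k: "r0 < k" unfolding r0_def using fI cI psubset_card_mono by metis
      have pr0: "pick I r0 = i" unfolding r0_def using pick_card_in_set[OF True] .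
      have "row B 0 = row B (Suc r0)"
        using r0k pr0 Bc by (intro eq_vecI) (auto simp: Bidx)
      then show "det B = 0" using det_identical_rows[OF Bc, of 0 "Suc r0"] r0k by simp
    next
      case False
      define I' where "I' = insert i I"
      have fI': "finite I'" using fI by (simp add: I'_def)
      have cI': "card I' = Suc k" using False fI cI by (simp add: I'_def)
      have I'd: "I' \<subseteq> {..<d}" using Id i by (simp add: I'_def)
      have I'dA: "I' \<subseteq> {..<dim_row A}" using I'd dA by simp
      have "\<not> P I' J'" using max[of I' J'] cJ' by (auto simp: k_def)
      then have d0: "det (submatrix A I' J') = 0" using I'd J'S cI' cJ' by (simp add: P_def)
      define Sb where "Sb = submatrix A I' J'"
      have Sbc: "Sb \<in> carrier_mat (Suc k) (Suc k)" using subm(1)[OF I'dA J'nA] cI' cJ' by (simp add: Sb_def)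
      obtain y where y: "y \<in> carrier_vec (Suc k)" "y \<noteq> 0\<^sub>v (Suc k)" "Sb *\<^sub>v y = 0\<^sub>v (Suc k)"
        using det_0_iff_vec_prod_zero[OF Sbc] d0 by (auto simp: Sb_def)
      have "B *\<^sub>v y = 0\<^sub>v (Suc k)"
      proof (rule eq_vecI)
        show "dim_vec (B *\<^sub>v y) = dim_vec (0\<^sub>v (Suc k))" using Bc by simp
        fix r assume "r < dim_vec (0\<^sub>v (Suc k))"
        then have r: "r < Suc k" by simp
        define \<rho> where "\<rho> = (if r = 0 then i else pick I (r - 1))"
        have \<rho>I: "\<rho> \<in> I'"
        proof (cases "r = 0")
          case True then show ?thesis by (simp add: \<rho>_def I'_def)
        next
          case False
          then have "r - 1 < card I" using r cI by simp
          then have "pick I (r - 1) \<in> I" by (rule pick_in_set[OF disjI1])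
          then show ?thesis using False by (simp add: \<rho>_def I'_def)
        qed
        define r' where "r' = card {a\<in>I'. a < \<rho>}"
        have "{a\<in>I'. a < \<rho>} \<subset> I'" using \<rho>I by auto
        then have r'k: "r' < Suc k" unfolding r'_def using fI' cI' psubset_card_mono by metis
        have pr': "pick I' r' = \<rho>" unfolding r'_def using pick_card_in_set[OF \<rho>I] .
        have "(B *\<^sub>v y) $ r = (\<Sum>c<Suc k. B $$ (r,c) * y $ c)" using mv_index[OF Bc y(1) r] .
        also have "\<dots> = (\<Sum>c<Suc k. Sb $$ (r',c) * y $ c)"
        proof (rule sum.cong[OF refl])
          fix c assume "c \<in> {..<Suc k}"
          then have c: "c < Suc k" by simp
          have "Sb $$ (r',c) = A $$ (pick I' r', pick J' c)"
            using subm(2)[OF I'dA J'nA, of r' c] r'k c cI' cJ' by (simp add: Sb_def)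
          then show "B $$ (r,c) * y $ c = Sb $$ (r',c) * y $ c" using Bidx[OF r c] pr' by (simp add: \<rho>_def)
        qed
        also have "\<dots> = (Sb *\<^sub>v y) $ r'" using mv_index[OF Sbc y(1) r'k] by simp
        also have "\<dots> = 0" using y(3) r'k by simp
        finally show "(B *\<^sub>v y) $ r = 0\<^sub>v (Suc k) $ r" using r by simp
      qed
      then show "det B = 0" using det_0_iff_vec_prod_zero[OF Bc] y by blast
    qed
    have "(A *\<^sub>v w) $ i = (\<Sum>l<n. A $$ (i,l) * w $ l)" using mulz_index[OF A wc i] .
    also have "\<dots> = (\<Sum>l\<in>J'. A $$ (i,l) * w $ l)"
      using J'S Sn by (intro sum.mono_neutral_right) (auto simp: w_def)
    also have "\<dots> = (\<Sum>c<Suc k. A $$ (i, pick J' c) * w $ pick J' c)"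
      using sum_pick[OF fJ', of "\<lambda>l. A $$ (i,l) * w $ l"] cJ' by simp
    also have "\<dots> = (\<Sum>c<Suc k. B $$ (0,c) * cofactor B 0 c)"
    proof (rule sum.cong[OF refl])
      fix c assume "c \<in> {..<Suc k}"
      then have c: "c < Suc k" by simp
      define p where "p = pick J' c"
      have pJ': "p \<in> J'" using pick_in_set[OF disjI1, of c J'] c cJ' by (simp add: p_def)
      have cp: "card {a\<in>J'. a < p} = c" using card_pick[OF disjI1, of c J'] c cJ' by (simp add: p_def)
      have pn: "p < n" using pJ' J'S Sn by auto
      have Jp: "J' - {p} \<subseteq> {..<dim_col A}" using J'nA by auto
      have cJp: "card (J' - {p}) = k" using pJ' fJ' cJ' by simp
      have md: "mat_delete B 0 c = submatrix A I (J' - {p})"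
      proof (rule eq_matI)
        show "dim_row (mat_delete B 0 c) = dim_row (submatrix A I (J' - {p}))"
          using subm(1)[OF IdA Jp] Bc cI by simp
        show "dim_col (mat_delete B 0 c) = dim_col (submatrix A I (J' - {p}))"
          using subm(1)[OF IdA Jp] Bc cJp by simp
        fix r c' assume rc: "r < dim_row (submatrix A I (J' - {p}))" "c' < dim_col (submatrix A I (J' - {p}))"
        then have r: "r < k" and c': "c' < k" using subm(1)[OF IdA Jp] cI cJp by auto
        have "mat_delete B 0 c $$ (r,c') = B $$ (Suc r, if c' < c then c' else Suc c')"
          using r c' Bc by (simp add: mat_delete_def)
        also have "\<dots> = A $$ (pick I r, pick J' (if c' < c then c' else Suc c'))"
          using Bidx r c' by simp
        also have "\<dots> = A $$ (pick I r, pick (J' - {p}) c')"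
          using pick_delete[OF fJ', of c c'] c c' cJ' by (simp add: p_def)
        also have "\<dots> = submatrix A I (J' - {p}) $$ (r,c')"
          using subm(2)[OF IdA Jp, of r c'] r c' cI cJp by simp
        finally show "mat_delete B 0 c $$ (r,c') = submatrix A I (J' - {p}) $$ (r,c')" .
      qed
      have "w $ p = (-1)^c * det (submatrix A I (J' - {p}))" using pJ' cp pn by (simp add: w_def)
      then show "A $$ (i, pick J' c) * w $ pick J' c = B $$ (0,c) * cofactor B 0 c"
        using md Bidx[of 0 c] c by (simp add: cofactor_def p_def)
    qed
    also have "\<dots> = det B" using laplace_expansion_row[OF Bc, of 0] by simp
    finally show "(A *\<^sub>v w) $ i = 0\<^sub>v d $ i" using detB i by simp
  qed
  show ?thesis using wc Aw w0 wunit wsupp wcard by blast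
qed



lemma coord1:
  fixes w z t :: int
  assumes "w \<in> {-1,0,1}" "z = 0 \<longrightarrow> w = 0" "t \<ge> 1" "w * z > 0 \<longrightarrow> t \<le> \<bar>z\<bar>"
  shows "(z - t * w) * z \<ge> 0" "z - t * w \<noteq> 0 \<longrightarrow> z \<noteq> 0" "w * z < 0 \<longrightarrow> z - t * w \<noteq> 0"
    "\<bar>z\<bar> = t \<and> w * z > 0 \<longrightarrow> z - t * w = 0"
  using assms by (auto simp: zero_le_mult_iff mult_less_0_iff zero_less_mult_iff)

lemma coord2:
  fixes v z' z :: int
  assumes "v * z' \<ge> 0" "\<bar>v\<bar> \<le> \<bar>z'\<bar>" "z' * z \<ge> 0" "z' \<noteq> 0 \<longrightarrow> z \<noteq> 0" "v \<in> {-1,0,1}"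
  shows "v * z \<ge> 0 \<and> \<bar>v\<bar> \<le> \<bar>z\<bar>"
  using assms by (auto simp: zero_le_mult_iff mult_less_0_iff zero_less_mult_iff)

lemma TU2:
  assumes A: "A \<in> carrier_mat d n" and tu: "totally_unimodular A"
  shows "z \<in> carrier_vec n \<Longrightarrow> A *\<^sub>v z = 0\<^sub>v d \<Longrightarrow> z \<noteq> 0\<^sub>v n \<Longrightarrow>
    \<exists>v \<in> carrier_vec n. A *\<^sub>v v = 0\<^sub>v d \<and> v \<noteq> 0\<^sub>v n \<and> v \<sqsubseteq> z \<and> (\<forall>i<n. v $ i \<in> {-1,0,1}) \<and>
     card {i. i < n \<and> v $ i \<noteq> 0} \<le> d + 1"
proof (induction "card {i. i < n \<and> z $ i \<noteq> 0}" arbitrary: z rule: less_induct)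
  case less
  note zc = less.prems(1) and Az = less.prems(2) and z0 = less.prems(3)
  obtain w where wc: "w \<in> carrier_vec n" and Aw: "A *\<^sub>v w = 0\<^sub>v d" and w0: "w \<noteq> 0\<^sub>v n"
    and wu: "\<forall>i<n. w $ i \<in> {-1,0,1}" and ws: "\<forall>i<n. z $ i = 0 \<longrightarrow> w $ i = 0"
    and wcard: "card {i. i < n \<and> w $ i \<noteq> 0} \<le> d + 1"
    using TU1[OF A tu zc Az z0] by blast
  have conf_of: "\<And>v. v \<in> carrier_vec n \<Longrightarrow> (\<forall>i<n. v $ i \<in> {-1,0,1}) \<Longrightarrow> (\<forall>i<n. z $ i = 0 \<longrightarrow> v $ i = 0)
      \<Longrightarrow> (\<forall>i<n. v $ i * z $ i \<ge> 0) \<Longrightarrow> v \<sqsubseteq> z"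
  proof -
    fix v assume v: "v \<in> carrier_vec n" "\<forall>i<n. v $ i \<in> {-1,0,1}" "\<forall>i<n. z $ i = 0 \<longrightarrow> v $ i = 0"
      "\<forall>i<n. v $ i * z $ i \<ge> 0"
    have "\<forall>i<n. \<bar>v $ i\<bar> \<le> \<bar>z $ i\<bar>"
    proof (intro allI impI)
      fix i assume i: "i < n"
      show "\<bar>v $ i\<bar> \<le> \<bar>z $ i\<bar>" using v(2,3) i by (cases "z $ i = 0") auto
    qed
    then show "v \<sqsubseteq> z" using v zc by (auto simp: conf_le_def)
  qed
  show ?case
  proof (cases "\<forall>i<n. w $ i * z $ i \<ge> 0")
    case True
    then show ?thesis using conf_of[OF wc wu ws True] wc Aw w0 wu wcard by blast
  next
    case F1: False
    show ?thesis
    proof (cases "\<forall>i<n. w $ i * z $ i \<le> 0")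
      case True
      define v where "v = (-1::int) \<cdot>\<^sub>v w"
      have vc: "v \<in> carrier_vec n" using wc by (simp add: v_def)
      have vu: "\<forall>i<n. v $ i \<in> {-1,0,1}" using wu wc by (auto simp: v_def)
      have vs: "\<forall>i<n. z $ i = 0 \<longrightarrow> v $ i = 0" using ws wc by (simp add: v_def)
      have vp: "\<forall>i<n. v $ i * z $ i \<ge> 0" using True wc by (simp add: v_def)
      have Av: "A *\<^sub>v v = 0\<^sub>v d"
      proof -
        have "A *\<^sub>v v = (-1::int) \<cdot>\<^sub>v (A *\<^sub>v w)" unfolding v_def using A wc
          by (intro eq_vecI) (auto simp: scalar_prod_smult_distrib[of _ n])
        then show ?thesis using Aw by (auto intro!: eq_vecI)
      qed
      have v0: "v \<noteq> 0\<^sub>v n"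
      proof
        assume "v = 0\<^sub>v n"
        have "\<forall>i<n. w $ i = 0"
        proof (intro allI impI)
          fix i assume i: "i < n"
          have "v $ i = 0" using \<open>v = 0\<^sub>v n\<close> i by simp
          then show "w $ i = 0" using i wc by (simp add: v_def)
        qed
        then have "w = 0\<^sub>v n" using wc by (intro eq_vecI) auto
        then show False using w0 by simp
      qed
      have "{i. i < n \<and> v $ i \<noteq> 0} = {i. i < n \<and> w $ i \<noteq> 0}" using wc by (auto simp: v_def)
      then have vcard: "card {i. i < n \<and> v $ i \<noteq> 0} \<le> d + 1" using wcard by simp
      show ?thesis using conf_of[OF vc vu vs vp] vc Av v0 vu vcard by blast
    next
      case F2: False
      obtain q where q: "q < n" "w $ q * z $ q < 0" using F1 by (auto simp: not_le)
      define Ps where "Ps = {i. i < n \<and> w $ i * z $ i > 0}"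
      have Psne: "Ps \<noteq> {}" using F2 by (auto simp: Ps_def not_le)
      have Psf: "finite Ps" by (simp add: Ps_def)
      define t where "t = Min ((\<lambda>i. \<bar>z $ i\<bar>) ` Ps)"
      have "t \<in> (\<lambda>i. \<bar>z $ i\<bar>) ` Ps" unfolding t_def using Psne Psf by (intro Min_in) auto
      then obtain m where m: "m \<in> Ps" "\<bar>z $ m\<bar> = t" by auto
      have tle: "\<And>i. i \<in> Ps \<Longrightarrow> t \<le> \<bar>z $ i\<bar>" unfolding t_def using Psf by (intro Min_le) auto
      have "z $ m \<noteq> 0" using m by (auto simp: Ps_def)
      then have t1: "t \<ge> 1" using m by linarith
      define z' where "z' = z - t \<cdot>\<^sub>v w"
      have z'c: "z' \<in> carrier_vec n" using zc wc by (simp add: z'_def)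
      have z'i: "\<And>i. i < n \<Longrightarrow> z' $ i = z $ i - t * w $ i" using zc wc by (simp add: z'_def)
      have co: "\<And>i. i < n \<Longrightarrow> (z' $ i) * z $ i \<ge> 0 \<and> (z' $ i \<noteq> 0 \<longrightarrow> z $ i \<noteq> 0) \<and>
           (w $ i * z $ i < 0 \<longrightarrow> z' $ i \<noteq> 0) \<and> (\<bar>z $ i\<bar> = t \<and> w $ i * z $ i > 0 \<longrightarrow> z' $ i = 0)"
      proof -
        fix i assume i: "i < n"
        have h: "w $ i \<in> {-1,0,1}" "z $ i = 0 \<longrightarrow> w $ i = 0" "t \<ge> 1" "w $ i * z $ i > 0 \<longrightarrow> t \<le> \<bar>z $ i\<bar>"
          using wu ws t1 tle i by (auto simp: Ps_def)
        show "(z' $ i) * z $ i \<ge> 0 \<and> (z' $ i \<noteq> 0 \<longrightarrow> z $ i \<noteq> 0) \<and>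
           (w $ i * z $ i < 0 \<longrightarrow> z' $ i \<noteq> 0) \<and> (\<bar>z $ i\<bar> = t \<and> w $ i * z $ i > 0 \<longrightarrow> z' $ i = 0)"
          using coord1[OF h] z'i[OF i] by simp
      qed
      have Az': "A *\<^sub>v z' = 0\<^sub>v d"
      proof -
        have "A *\<^sub>v z' = A *\<^sub>v z - A *\<^sub>v (t \<cdot>\<^sub>v w)" unfolding z'_def
          using mult_minus_distrib_mat_vec[OF A zc] wc by simp
        also have "A *\<^sub>v (t \<cdot>\<^sub>v w) = t \<cdot>\<^sub>v (A *\<^sub>v w)" using A wc
          by (intro eq_vecI) (auto simp: scalar_prod_smult_distrib[of _ n])
        finally show ?thesis using Az Aw by (intro eq_vecI) auto
      qed
      have z'0: "z' \<noteq> 0\<^sub>v n"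
      proof
        assume "z' = 0\<^sub>v n"
        then have "z' $ q = 0" using q by simp
        then show False using co[OF q(1)] q by simp
      qed
      have mn: "m < n" "z $ m \<noteq> 0" using m by (auto simp: Ps_def)
      have sub: "{i. i < n \<and> z' $ i \<noteq> 0} \<subset> {i. i < n \<and> z $ i \<noteq> 0}"
      proof
        show "{i. i < n \<and> z' $ i \<noteq> 0} \<subseteq> {i. i < n \<and> z $ i \<noteq> 0}" using co by blast
        have "z' $ m = 0" using co[OF mn(1)] m by (simp add: Ps_def)
        then show "{i. i < n \<and> z' $ i \<noteq> 0} \<noteq> {i. i < n \<and> z $ i \<noteq> 0}" using mn by blast
      qed
      have "card {i. i < n \<and> z' $ i \<noteq> 0} < card {i. i < n \<and> z $ i \<noteq> 0}"
        using sub by (intro psubset_card_mono) auto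
      from less.hyps[OF this z'c Az' z'0] obtain v where v: "v \<in> carrier_vec n" "A *\<^sub>v v = 0\<^sub>v d"
        "v \<noteq> 0\<^sub>v n" "v \<sqsubseteq> z'" "\<forall>i<n. v $ i \<in> {-1,0,1}" "card {i. i < n \<and> v $ i \<noteq> 0} \<le> d + 1"
        by blast
      have "v \<sqsubseteq> z"
      proof -
        have "\<forall>i<n. v $ i * z $ i \<ge> 0 \<and> \<bar>v $ i\<bar> \<le> \<bar>z $ i\<bar>"
        proof (intro allI impI)
          fix i assume i: "i < n"
          have h: "v $ i * z' $ i \<ge> 0" "\<bar>v $ i\<bar> \<le> \<bar>z' $ i\<bar>" using v(1,4) i by (auto simp: conf_le_def)
          show "v $ i * z $ i \<ge> 0 \<and> \<bar>v $ i\<bar> \<le> \<bar>z $ i\<bar>"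
            using coord2[OF h] co[OF i] v(5) i by blast
        qed
        then show ?thesis using v(1) zc by (auto simp: conf_le_def)
      qed
      then show ?thesis using v by blast
    qed
  qed
qed

lemma graver_TU: assumes A: "A \<in> carrier_mat d n" and tu: "totally_unimodular A" and g: "g \<in> graver A"
  shows "(\<forall>i<n. g $ i \<in> {-1,0,1}) \<and> norm1 g \<le> int d + 1"
proof -
  have gk: "g \<in> int_kernel A" "g \<noteq> 0\<^sub>v n" using graver_kernel[OF g] A by auto
  have gc: "g \<in> carrier_vec n" "A *\<^sub>v g = 0\<^sub>v d" using gk A by (auto simp: int_kernel_def)
  obtain v where v: "v \<in> carrier_vec n" "A *\<^sub>v v = 0\<^sub>v d" "v \<noteq> 0\<^sub>v n" "v \<sqsubseteq> g"
    "\<forall>i<n. v $ i \<in> {-1,0,1}" "card {i. i < n \<and> v $ i \<noteq> 0} \<le> d + 1"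
    using TU2[OF A tu gc gk(2)] by blast
  have "v \<in> int_kernel A - {0\<^sub>v (dim_col A)}" using v A by (auto simp: int_kernel_def)
  then have "v = g" using g v(4) unfolding graver_def by blast
  then have gu: "\<forall>i<n. g $ i \<in> {-1,0,1}" and gcard: "card {i. i < n \<and> g $ i \<noteq> 0} \<le> d + 1" using v by auto
  have "norm1 g = (\<Sum>i<n. if g $ i \<noteq> 0 then 1 else 0)"
    unfolding norm1_def using gc gu by (intro sum.cong) auto
  also have "\<dots> = (\<Sum>i\<in>{i\<in>{..<n}. g $ i \<noteq> 0}. 1)"
    using sum.inter_filter[of "{..<n}" "\<lambda>_. 1::int" "\<lambda>i. g $ i \<noteq> 0"] by (simp only: finite_lessThan)
  also have "\<dots> = int (card {i\<in>{..<n}. g $ i \<noteq> 0})" by (simp only: sum_constant mult_1_right of_nat_id)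
  also have "{i\<in>{..<n}. g $ i \<noteq> 0} = {i. i < n \<and> g $ i \<noteq> 0}" by auto
  finally show ?thesis using gu gcard by simp
qed



lemma feas_conf:
  assumes A: "A \<in> carrier_mat d n" and fx: "feasible A b u x" and fw: "feasible A b u (x + w)"
    and g: "g \<sqsubseteq> w" and gc: "g \<in> carrier_vec n" and gk: "A *\<^sub>v g = 0\<^sub>v d"
  shows "feasible A b u (x + g)"
proof -
  have xc: "x \<in> carrier_vec n" using fx A by (auto simp: feasible_def)
  have wc: "dim_vec w = n" using g gc by (auto simp: conf_le_def)
  have "A *\<^sub>v (x + g) = A *\<^sub>v x + A *\<^sub>v g" using mult_add_distrib_mat_vec[OF A xc gc] .
  also have "\<dots> = b" using fx gk A by (auto simp: feasible_def)
  finally have e: "A *\<^sub>v (x + g) = b" .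
  have "\<forall>i<n. 0 \<le> (x+g) $ i \<and> (x+g) $ i \<le> u $ i"
  proof (intro allI impI)
    fix i assume i: "i < n"
    have h1: "0 \<le> x$i" "x$i \<le> u$i" using fx i A by (auto simp: feasible_def)
    have h2: "0 \<le> x$i + w$i" "x$i + w$i \<le> u$i" using fw i A wc by (auto simp: feasible_def)
    have h3: "g$i * w$i \<ge> 0" "\<bar>g$i\<bar> \<le> \<bar>w$i\<bar>" using g i gc by (auto simp: conf_le_def)
    have "0 \<le> x$i + g$i \<and> x$i + g$i \<le> u$i" using h1 h2 h3
      by (cases "g$i" "0::int" rule: linorder_cases; cases "w$i" "0::int" rule: linorder_cases;
        auto simp: mult_less_0_iff zero_le_mult_iff)
    then show "0 \<le> (x+g) $ i \<and> (x+g) $ i \<le> u $ i" using i gc by simp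
  qed
  then show ?thesis using e xc gc A by (auto simp: feasible_def)
qed

lemma mult_mat_vec_smult: assumes "(A :: 'a::comm_ring mat) \<in> carrier_mat nr nc" "v \<in> carrier_vec nc"
  shows "A *\<^sub>v (k \<cdot>\<^sub>v v) = k \<cdot>\<^sub>v (A *\<^sub>v v)"
  using assms by (intro eq_vecI) (auto simp: scalar_prod_smult_distrib[of _ nc])

locale sdl =
  fixes A :: "int mat" and b c u :: "int vec" and d n N :: nat and xs zf :: "nat \<Rightarrow> int vec"
    and af :: "nat \<Rightarrow> int"
  assumes A: "A \<in> carrier_mat d n" and cc: "c \<in> carrier_vec n" and uc: "u \<in> carrier_vec n"
    and x0: "feasible A b u (xs 0)"
    and stp: "\<And>k. k < N \<Longrightarrow> zf k \<in> graver A \<and> feasible A b u (xs k + zf k) \<and>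
        (\<forall>z' \<in> graver A. feasible A b u (xs k + z') \<longrightarrow> ratio c z' \<le> ratio c (zf k)) \<and>
        ratio c (zf k) > 0 \<and>
        feasible A b u (xs k + af k \<cdot>\<^sub>v zf k) \<and>
        (\<forall>\<beta>::int. feasible A b u (xs k + \<beta> \<cdot>\<^sub>v zf k) \<longrightarrow> \<beta> \<le> af k) \<and>
        xs (Suc k) = xs k + af k \<cdot>\<^sub>v zf k"
    and unit: "\<And>k i. k < N \<Longrightarrow> i < n \<Longrightarrow> zf k $ i \<in> {-1,0,1}"
begin

definition r where "r k = ratio c (zf k)"

lemma dims: "dim_row A = d" "dim_col A = n" using A by auto

lemma zprops: assumes "k < N"
  shows "zf k \<in> carrier_vec n" "A *\<^sub>v zf k = 0\<^sub>v d" "zf k \<noteq> 0\<^sub>v n" "norm1 (zf k) > 0"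
proof -
  have "zf k \<in> graver A" using stp[OF assms] by blast
  then have "zf k \<in> int_kernel A" "zf k \<noteq> 0\<^sub>v n" using graver_kernel dims by auto
  then show z: "zf k \<in> carrier_vec n" "A *\<^sub>v zf k = 0\<^sub>v d" "zf k \<noteq> 0\<^sub>v n"
    using dims by (auto simp: int_kernel_def)
  show "norm1 (zf k) > 0" using norm1_pos z by blast
qed

lemma feas: "k \<le> N \<Longrightarrow> feasible A b u (xs k)"
proof (induction k)
  case 0 then show ?case using x0 by simp
next
  case (Suc k) then show ?case using stp[of k] by auto
qed

lemma xc: "k \<le> N \<Longrightarrow> xs k \<in> carrier_vec n"
  using feas dims by (auto simp: feasible_def)

lemma af_ge1: "k < N \<Longrightarrow> af k \<ge> 1"
proof -
  assume k: "k < N"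
  have "feasible A b u (xs k + 1 \<cdot>\<^sub>v zf k)" using stp[OF k] by simp
  then show "af k \<ge> 1" using stp[OF k] by blast
qed

lemma ratio_eq: "k < N \<Longrightarrow> - real_of_int (c \<bullet> zf k) = r k * real_of_int (norm1 (zf k))"
  using zprops(4)[of k] by (simp add: r_def ratio_def)

lemma steep: assumes k: "k < N" and w: "w \<in> carrier_vec n" "A *\<^sub>v w = 0\<^sub>v d"
  and fw: "feasible A b u (xs k + w)"
  shows "- real_of_int (c \<bullet> w) \<le> r k * real_of_int (norm1 w)"
proof (rule decomp_bound[of w A])
  show "w \<in> int_kernel A" using w dims by (auto simp: int_kernel_def)
  show "0 \<le> r k" using stp[OF k] by (simp add: r_def)
  show "c \<in> carrier_vec (dim_col A)" using cc dims by simp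
  show "\<forall>g\<in>graver A. g \<sqsubseteq> w \<longrightarrow> - real_of_int (c \<bullet> g) \<le> r k * real_of_int (norm1 g)"
  proof (intro ballI impI)
    fix g assume g: "g \<in> graver A" "g \<sqsubseteq> w"
    have gk: "g \<in> carrier_vec n" "A *\<^sub>v g = 0\<^sub>v d" "g \<noteq> 0\<^sub>v n"
      using graver_kernel[OF g(1)] dims by (auto simp: int_kernel_def)
    have "feasible A b u (xs k + g)"
      using feas_conf[OF A feas[of k] fw g(2) gk(1,2)] k by simp
    then have le: "ratio c g \<le> r k" using stp[OF k] g(1) by (simp add: r_def)
    have np: "real_of_int (norm1 g) > 0" using norm1_pos gk by simp
    have "- real_of_int (c \<bullet> g) = ratio c g * real_of_int (norm1 g)"
      using np by (simp add: ratio_def)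
    also have "\<dots> \<le> r k * real_of_int (norm1 g)" using le np by (intro mult_right_mono) auto
    finally show "- real_of_int (c \<bullet> g) \<le> r k * real_of_int (norm1 g)" .
  qed
qed


lemma xs_comp: assumes "k \<le> m" "m \<le> N" "i < n"
  shows "xs m $ i = xs k $ i + (\<Sum>j\<in>{k..<m}. af j * zf j $ i)"
  using assms(1,2)
proof (induction m rule: dec_induct)
  case base then show ?case by simp
next
  case (step m)
  have m: "m < N" using step by simp
  have "xs (Suc m) $ i = xs m $ i + af m * zf m $ i"
    using stp[OF m] zprops(1)[OF m] xc[of m] m assms(3) by simp
  then show ?case using step by (simp add: algebra_simps)
qed

lemma cx: assumes "k \<le> m" "m \<le> N"
  shows "c \<bullet> xs m = c \<bullet> xs k + (\<Sum>j\<in>{k..<m}. af j * (c \<bullet> zf j))"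
  using assms
proof (induction m rule: dec_induct)
  case base then show ?case by simp
next
  case (step m)
  have m: "m < N" using step by simp
  have "c \<bullet> xs (Suc m) = c \<bullet> xs m + af m * (c \<bullet> zf m)"
    using stp[OF m] zprops(1)[OF m] xc[of m] m cc
    by (simp add: scalar_prod_add_distrib[of _ n])
  then show ?case using step by (simp add: algebra_simps)
qed

lemma norm1_add_le: "dim_vec v = dim_vec w \<Longrightarrow> norm1 (v + w) \<le> norm1 v + norm1 w"
  unfolding norm1_def by (simp add: sum.distrib[symmetric] abs_triangle_ineq sum_mono)

lemma norm1_smult: "norm1 (a \<cdot>\<^sub>v v) = \<bar>a\<bar> * norm1 v"
  unfolding norm1_def by (simp add: sum_distrib_left abs_mult)

lemma mono1: assumes k: "Suc k < N" shows "r (Suc k) \<le> r k"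
proof -
  have k0: "k < N" using k by simp
  define w where "w = af k \<cdot>\<^sub>v zf k + zf (Suc k)"
  have zc: "zf k \<in> carrier_vec n" "zf (Suc k) \<in> carrier_vec n" using zprops k k0 by auto
  have wc: "w \<in> carrier_vec n" using zc by (simp add: w_def)
  have Aw: "A *\<^sub>v w = 0\<^sub>v d" unfolding w_def
    using zprops(2)[OF k0] zprops(2)[OF k] zc A
    by (simp add: mult_add_distrib_mat_vec[OF A] mult_mat_vec_smult[OF A zc(1)]; intro eq_vecI; simp)
  have "xs k + w = xs (Suc k) + zf (Suc k)"
    using stp[OF k0] zc xc[of k] k0 unfolding w_def
    by (intro eq_vecI) auto
  then have fw: "feasible A b u (xs k + w)" using stp[OF k] by simp
  have st: "- real_of_int (c \<bullet> w) \<le> r k * real_of_int (norm1 w)" using steep[OF k0 wc Aw fw] .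
  have cw: "c \<bullet> w = af k * (c \<bullet> zf k) + c \<bullet> zf (Suc k)"
    unfolding w_def using zc cc by (simp add: scalar_prod_add_distrib[of _ n])
  have nw: "norm1 w \<le> af k * norm1 (zf k) + norm1 (zf (Suc k))"
    unfolding w_def using norm1_add_le[of "af k \<cdot>\<^sub>v zf k" "zf (Suc k)"] zc af_ge1[OF k0]
    by (simp add: norm1_smult)
  have rk: "r k \<ge> 0" using stp[OF k0] by (simp add: r_def)
  have "r k * real_of_int (norm1 w) \<le> r k * (real_of_int (af k) * real_of_int (norm1 (zf k)) + real_of_int (norm1 (zf (Suc k))))"
    using nw rk by (intro mult_left_mono) (simp_all flip: of_int_mult of_int_add)
  note h = this
  have "real_of_int (af k) * (r k * real_of_int (norm1 (zf k))) + r (Suc k) * real_of_int (norm1 (zf (Suc k)))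
      \<le> real_of_int (af k) * (r k * real_of_int (norm1 (zf k))) + r k * real_of_int (norm1 (zf (Suc k)))"
  proof -
    have e1: "real_of_int (c \<bullet> w) = real_of_int (af k) * real_of_int (c \<bullet> zf k) + real_of_int (c \<bullet> zf (Suc k))"
      using cw by simp
    have e2: "real_of_int (af k) * real_of_int (c \<bullet> zf k) = - (real_of_int (af k) * (r k * real_of_int (norm1 (zf k))))"
      using ratio_eq[OF k0] by (metis minus_equation_iff mult_minus_right)
    show ?thesis using h st e1 e2 ratio_eq[OF k] by (simp add: algebra_simps)
  qed
  then have "r (Suc k) * real_of_int (norm1 (zf (Suc k))) \<le> r k * real_of_int (norm1 (zf (Suc k)))" by simp
  then show ?thesis using zprops(4)[OF k] by simp
qed

lemma mono: assumes "k \<le> l" "l < N" shows "r l \<le> r k"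
  using assms
proof (induction l rule: dec_induct)
  case base then show ?case by simp
next
  case (step m) then show ?case using mono1[of m] by simp
qed

lemma sat: assumes k: "k < N"
  shows "\<exists>i<n. (zf k $ i = 1 \<and> xs (Suc k) $ i = u $ i) \<or> (zf k $ i = -1 \<and> xs (Suc k) $ i = 0)"
proof (rule ccontr)
  assume no: "\<not> ?thesis"
  have zc: "zf k \<in> carrier_vec n" using zprops k by auto
  have x1: "xs (Suc k) \<in> carrier_vec n" using xc k by simp
  have f1: "feasible A b u (xs (Suc k))" using feas k by simp
  have e: "xs k + (af k + 1) \<cdot>\<^sub>v zf k = xs (Suc k) + zf k"
    using stp[OF k] zc xc[of k] k by (intro eq_vecI) (auto simp: algebra_simps)
  have "A *\<^sub>v (xs (Suc k) + zf k) = A *\<^sub>v xs (Suc k) + A *\<^sub>v zf k"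
    using mult_add_distrib_mat_vec[OF A x1 zc] .
  also have "\<dots> = b" using f1 zprops(2)[OF k] A by (auto simp: feasible_def)
  finally have Ae: "A *\<^sub>v (xs (Suc k) + zf k) = b" .
  have "\<forall>i<n. 0 \<le> (xs (Suc k) + zf k) $ i \<and> (xs (Suc k) + zf k) $ i \<le> u $ i"
  proof (intro allI impI)
    fix i assume i: "i < n"
    have h: "0 \<le> xs (Suc k) $ i" "xs (Suc k) $ i \<le> u $ i" using f1 i dims by (auto simp: feasible_def)
    have "zf k $ i \<in> {-1,0,1}" using unit k i by simp
    then show "0 \<le> (xs (Suc k) + zf k) $ i \<and> (xs (Suc k) + zf k) $ i \<le> u $ i"
      using h no i zc by auto
  qed
  then have "feasible A b u (xs k + (af k + 1) \<cdot>\<^sub>v zf k)"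
    using e Ae x1 zc dims by (auto simp: feasible_def)
  then have "af k + 1 \<le> af k" using stp[OF k] by blast
  then show False by simp
qed


lemma tie: assumes kl: "k < l" "l < N" and req: "r l = r k" and i: "i < n"
  and si: "(zf k $ i = 1 \<and> xs (Suc k) $ i = u $ i) \<or> (zf k $ i = -1 \<and> xs (Suc k) $ i = 0)"
  shows "zf l $ i = 0"
proof -
  have rj: "\<And>j. k \<le> j \<Longrightarrow> j \<le> l \<Longrightarrow> r j = r k"
  proof -
    fix j assume j: "k \<le> j" "j \<le> l"
    have "r j \<le> r k" using mono[of k j] j kl by simp
    moreover have "r l \<le> r j" using mono[of j l] j kl by simp
    ultimately show "r j = r k" using req by simp
  qed
  have k0: "k < N" using kl by simp
  have xkc: "xs k \<in> carrier_vec n" and xlc: "xs l \<in> carrier_vec n" using xc kl by auto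
  have zlc: "zf l \<in> carrier_vec n" using zprops kl by auto
  define w where "w = (xs l + zf l) - xs k"
  have wc: "w \<in> carrier_vec n" using xkc xlc zlc by (simp add: w_def)
  have wi: "\<And>j. j < n \<Longrightarrow> w $ j = xs l $ j + zf l $ j - xs k $ j"
    using xkc xlc zlc by (simp add: w_def)
  have bk: "A *\<^sub>v xs k = b" "A *\<^sub>v xs l = b" using feas kl dims by (auto simp: feasible_def)
  have Aw: "A *\<^sub>v w = 0\<^sub>v d" unfolding w_def
  proof -
    have "A *\<^sub>v (xs l + zf l - xs k) = A *\<^sub>v (xs l + zf l) - A *\<^sub>v xs k"
      using mult_minus_distrib_mat_vec[OF A _ xkc] xlc zlc by simp
    also have "\<dots> = (b + 0\<^sub>v d) - b"
      using mult_add_distrib_mat_vec[OF A xlc zlc] bk zprops(2)[OF kl(2)] by simp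
    also have "\<dots> = 0\<^sub>v d" using bk A by (intro eq_vecI) auto
    finally show "A *\<^sub>v (xs l + zf l - xs k) = 0\<^sub>v d" .
  qed
  have "xs k + w = xs l + zf l" using xkc xlc zlc by (intro eq_vecI) (auto simp: w_def)
  then have fw: "feasible A b u (xs k + w)" using stp[OF kl(2)] by simp
  have st: "- real_of_int (c \<bullet> w) \<le> r k * real_of_int (norm1 w)" using steep[OF k0 wc Aw fw] .
  have cw: "c \<bullet> w = (\<Sum>j\<in>{k..<l}. af j * (c \<bullet> zf j)) + c \<bullet> zf l"
  proof -
    have "c \<bullet> w = c \<bullet> (xs l + zf l) - c \<bullet> xs k"
      unfolding w_def using scalar_prod_minus_distrib[OF cc _ xkc] xlc zlc by simp
    also have "\<dots> = c \<bullet> xs l + c \<bullet> zf l - c \<bullet> xs k"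
      using scalar_prod_add_distrib[OF cc xlc zlc] by simp
    finally show ?thesis using cx[of k l] kl by simp
  qed
  define D where "D i = (\<Sum>j\<in>{k..<l}. af j * \<bar>zf j $ i\<bar>)" for i
  have sumD: "(\<Sum>i<n. D i) = (\<Sum>j\<in>{k..<l}. af j * norm1 (zf j))"
  proof -
    have "(\<Sum>i<n. D i) = (\<Sum>j\<in>{k..<l}. \<Sum>i<n. af j * \<bar>zf j $ i\<bar>)"
      unfolding D_def by (rule sum.swap)
    also have "\<dots> = (\<Sum>j\<in>{k..<l}. af j * norm1 (zf j))"
    proof (rule sum.cong[OF refl])
      fix j assume "j \<in> {k..<l}"
      then have "zf j \<in> carrier_vec n" using zprops kl by auto
      then show "(\<Sum>i<n. af j * \<bar>zf j $ i\<bar>) = af j * norm1 (zf j)"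
        by (simp add: norm1_def sum_distrib_left)
    qed
    finally show ?thesis .
  qed
  have sD: "(\<Sum>i<n. D i + \<bar>zf l $ i\<bar>) = (\<Sum>j\<in>{k..<l}. af j * norm1 (zf j)) + norm1 (zf l)"
    using sumD zlc by (simp add: sum.distrib norm1_def)
  have rcw: "- real_of_int (c \<bullet> w) = r k * real_of_int (\<Sum>i<n. D i + \<bar>zf l $ i\<bar>)"
  proof -
    have e: "\<And>j. j \<in> {k..<l} \<Longrightarrow> real_of_int (af j) * (- real_of_int (c \<bullet> zf j)) = real_of_int (af j) * (r k * real_of_int (norm1 (zf j)))"
    proof -
      fix j assume j: "j \<in> {k..<l}"
      then have "- real_of_int (c \<bullet> zf j) = r j * real_of_int (norm1 (zf j))" using ratio_eq[of j] kl by simp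
      moreover have "r j = r k" using rj[of j] j by simp
      ultimately show "real_of_int (af j) * (- real_of_int (c \<bullet> zf j)) = real_of_int (af j) * (r k * real_of_int (norm1 (zf j)))" by simp
    qed
    have el: "- real_of_int (c \<bullet> zf l) = r k * real_of_int (norm1 (zf l))" using ratio_eq[OF kl(2)] req by simp
    have "- real_of_int (c \<bullet> w) = (\<Sum>j\<in>{k..<l}. real_of_int (af j) * (- real_of_int (c \<bullet> zf j))) + (- real_of_int (c \<bullet> zf l))"
      using cw by (simp add: sum_negf)
    also have "\<dots> = (\<Sum>j\<in>{k..<l}. real_of_int (af j) * (r k * real_of_int (norm1 (zf j)))) + r k * real_of_int (norm1 (zf l))"
      using el by (simp only: sum.cong[OF refl e])
    also have "\<dots> = r k * ((\<Sum>j\<in>{k..<l}. real_of_int (af j) * real_of_int (norm1 (zf j))) + real_of_int (norm1 (zf l)))"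
      by (simp add: distrib_left sum_distrib_left mult_ac)
    also have "\<dots> = r k * real_of_int (\<Sum>i<n. D i + \<bar>zf l $ i\<bar>)"
      unfolding sD by simp
    finally show ?thesis .
  qed
  have nw: "norm1 w = (\<Sum>i<n. \<bar>w $ i\<bar>)" using wc by (simp add: norm1_def)
  have rk: "r k > 0" using stp[OF k0] by (simp add: r_def)
  have "r k * real_of_int (\<Sum>i<n. D i + \<bar>zf l $ i\<bar>) \<le> r k * real_of_int (\<Sum>i<n. \<bar>w $ i\<bar>)"
    using st rcw nw by simp
  then have "real_of_int (\<Sum>i<n. D i + \<bar>zf l $ i\<bar>) \<le> real_of_int (\<Sum>i<n. \<bar>w $ i\<bar>)"
    using rk by (rule mult_left_le_imp_le)
  then have le: "(\<Sum>i<n. D i + \<bar>zf l $ i\<bar>) \<le> (\<Sum>i<n. \<bar>w $ i\<bar>)" by (simp only: of_int_le_iff)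
  have afa: "\<And>m. m < l \<Longrightarrow> \<bar>af m\<bar> = af m"
  proof -
    fix m assume "m < l" then have "af m \<ge> 1" using af_ge1 kl by simp
    then show "\<bar>af m\<bar> = af m" by simp
  qed
  have diffx: "\<And>j k'. k' \<le> l \<Longrightarrow> j < n \<Longrightarrow> \<bar>xs l $ j - xs k' $ j\<bar> \<le> (\<Sum>m\<in>{k'..<l}. af m * \<bar>zf m $ j\<bar>)"
  proof -
    fix j k' assume a: "k' \<le> l" "j < n"
    have "xs l $ j - xs k' $ j = (\<Sum>m\<in>{k'..<l}. af m * zf m $ j)" using xs_comp[OF a(1) _ a(2)] kl by simp
    also have "\<bar>\<dots>\<bar> \<le> (\<Sum>m\<in>{k'..<l}. \<bar>af m * zf m $ j\<bar>)" by (rule sum_abs)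
    also have "\<dots> = (\<Sum>m\<in>{k'..<l}. af m * \<bar>zf m $ j\<bar>)"
      using afa by (intro sum.cong) (auto simp: abs_mult)
    finally show "\<bar>xs l $ j - xs k' $ j\<bar> \<le> (\<Sum>m\<in>{k'..<l}. af m * \<bar>zf m $ j\<bar>)" .
  qed
  have tnn: "\<And>j. j < n \<Longrightarrow> D j + \<bar>zf l $ j\<bar> - \<bar>w $ j\<bar> \<ge> 0"
  proof -
    fix j assume j: "j < n"
    have "\<bar>xs l $ j - xs k $ j\<bar> \<le> D j" using diffx[of k j] kl j by (simp add: D_def)
    then show "D j + \<bar>zf l $ j\<bar> - \<bar>w $ j\<bar> \<ge> 0" using wi[OF j] by linarith
  qed
  have "(\<Sum>j<n. D j + \<bar>zf l $ j\<bar> - \<bar>w $ j\<bar>) \<le> 0" using le by (simp add: sum_subtractf)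
  moreover have "D i + \<bar>zf l $ i\<bar> - \<bar>w $ i\<bar> \<le> (\<Sum>j<n. D j + \<bar>zf l $ j\<bar> - \<bar>w $ j\<bar>)"
    using tnn i by (intro member_le_sum) auto
  ultimately have eq0: "\<bar>w $ i\<bar> = D i + \<bar>zf l $ i\<bar>" using tnn[OF i] by linarith
  define D' where "D' = (\<Sum>m\<in>{Suc k..<l}. af m * \<bar>zf m $ i\<bar>)"
  have Dsplit: "D i = af k * \<bar>zf k $ i\<bar> + D'"
    unfolding D_def D'_def using kl by (simp add: sum.atLeast_Suc_lessThan)
  have v1: "\<bar>xs l $ i - xs (Suc k) $ i\<bar> \<le> D'" using diffx[of "Suc k" i] kl i by (simp add: D'_def)
  have xk1: "xs (Suc k) $ i = xs k $ i + af k * zf k $ i" using xs_comp[of k "Suc k" i] kl i by simp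
  have a1: "af k \<ge> 1" using af_ge1 k0 by simp
  have fl: "0 \<le> xs l $ i + zf l $ i" "xs l $ i + zf l $ i \<le> u $ i"
    using stp[OF kl(2)] i xlc zlc dims by (auto simp: feasible_def)
  show ?thesis using si
  proof
    assume s: "zf k $ i = 1 \<and> xs (Suc k) $ i = u $ i"
    have we: "w $ i = af k + (xs l $ i - xs (Suc k) $ i) + zf l $ i" using wi[OF i] xk1 s by simp
    have e: "\<bar>w $ i\<bar> = af k + D' + \<bar>zf l $ i\<bar>" using eq0 Dsplit s by simp
    have v1': "- D' \<le> xs l $ i - xs (Suc k) $ i" "xs l $ i - xs (Suc k) $ i \<le> D'" using v1 by linarith+
    show ?thesis
    proof (cases "0 \<le> w $ i")
      case True
      then have "w $ i = af k + D' + \<bar>zf l $ i\<bar>" using e by simp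
      then show ?thesis using we v1' fl s a1 by (cases "0 \<le> zf l $ i") (simp_all add: abs_if)
    next
      case False
      then have "- w $ i = af k + D' + \<bar>zf l $ i\<bar>" using e by simp
      then show ?thesis using we v1' fl s a1 by (cases "0 \<le> zf l $ i") (simp_all add: abs_if)
    qed
  next
    assume s: "zf k $ i = -1 \<and> xs (Suc k) $ i = 0"
    have we: "w $ i = - af k + (xs l $ i - xs (Suc k) $ i) + zf l $ i" using wi[OF i] xk1 s by simp
    have e: "\<bar>w $ i\<bar> = af k + D' + \<bar>zf l $ i\<bar>" using eq0 Dsplit s by simp
    have v1': "- D' \<le> xs l $ i - xs (Suc k) $ i" "xs l $ i - xs (Suc k) $ i \<le> D'" using v1 by linarith+
    show ?thesis
    proof (cases "0 \<le> w $ i")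
      case True
      then have "w $ i = af k + D' + \<bar>zf l $ i\<bar>" using e by simp
      then show ?thesis using we v1' fl s a1 by (cases "0 \<le> zf l $ i") (simp_all add: abs_if)
    next
      case False
      then have "- w $ i = af k + D' + \<bar>zf l $ i\<bar>" using e by simp
      then show ?thesis using we v1' fl s a1 by (cases "0 \<le> zf l $ i") (simp_all add: abs_if)
    qed
  qed
qed

end


context sdl begin

lemma count: assumes normb: "\<And>k. k < N \<Longrightarrow> norm1 (zf k) \<le> int d + 1"
  shows "int N \<le> int n * (int d + 1) * norm1 c"
proof -
  have "\<forall>k\<in>{..<N}. \<exists>i. i < n \<and> ((zf k $ i = 1 \<and> xs (Suc k) $ i = u $ i) \<or> (zf k $ i = -1 \<and> xs (Suc k) $ i = 0))"
    using sat by blast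
  then obtain si where si: "\<And>k. k < N \<Longrightarrow> si k < n \<and> ((zf k $ si k = 1 \<and> xs (Suc k) $ si k = u $ si k) \<or> (zf k $ si k = -1 \<and> xs (Suc k) $ si k = 0))"
    using bchoice[of "{..<N}"] by (metis lessThan_iff)
  define key where "key k = (r k, si k)" for k
  have inj: "inj_on key {..<N}"
  proof (rule inj_onI)
    fix k l assume kl: "k \<in> {..<N}" "l \<in> {..<N}" "key k = key l"
    have ne: "\<And>k l. k < l \<Longrightarrow> l < N \<Longrightarrow> key k = key l \<Longrightarrow> False"
    proof -
      fix k l assume a: "k < l" "l < N" "key k = key l"
      then have e: "r l = r k" "si l = si k" by (auto simp: key_def)
      have "zf l $ si k = 0" using tie[OF a(1,2) e(1)] si[of k] a by simp
      then show False using si[of l] a e by auto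
    qed
    show "k = l" using ne kl by (metis lessThan_iff linorder_neqE_nat)
  qed
  define Rs where "Rs = (\<lambda>(p,q). real_of_int p / real_of_int q) ` ({1..norm1 c} \<times> {1..int d + 1})"
  have sub: "key ` {..<N} \<subseteq> Rs \<times> {..<n}"
  proof
    fix x assume "x \<in> key ` {..<N}"
    then obtain k where k: "k < N" "x = key k" by auto
    have zc: "zf k \<in> carrier_vec n" and np: "norm1 (zf k) > 0" using zprops k by auto
    have rpos: "r k > 0" using stp[OF k(1)] by (simp add: r_def)
    have req: "r k = real_of_int (- (c \<bullet> zf k)) / real_of_int (norm1 (zf k))"
      by (simp add: r_def ratio_def)
    have p1: "- (c \<bullet> zf k) \<ge> 1"
    proof -
      have "real_of_int (- (c \<bullet> zf k)) > 0" using rpos req np by (simp add: zero_less_divide_iff divide_less_0_iff)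
      then show ?thesis by simp
    qed
    have p2: "- (c \<bullet> zf k) \<le> norm1 c"
    proof -
      have "- (c \<bullet> zf k) = (\<Sum>i<n. - (c $ i * zf k $ i))"
        using zc by (simp add: scalar_prod_def sum_negf lessThan_atLeast0)
      also have "\<dots> \<le> (\<Sum>i<n. \<bar>c $ i\<bar>)"
      proof (rule sum_mono)
        fix i assume "i \<in> {..<n}"
        then have "zf k $ i \<in> {-1,0,1}" using unit k by simp
        then show "- (c $ i * zf k $ i) \<le> \<bar>c $ i\<bar>" by auto
      qed
      also have "\<dots> = norm1 c" using cc by (simp add: norm1_def)
      finally show ?thesis .
    qed
    have "r k \<in> Rs" unfolding Rs_def req
      using p1 p2 np normb[OF k(1)] by (intro image_eqI[of _ _ "(- (c \<bullet> zf k), norm1 (zf k))"]) auto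
    then show "x \<in> Rs \<times> {..<n}" using k si[OF k(1)] by (simp add: key_def)
  qed
  have "N = card (key ` {..<N})" using card_image[OF inj] by simp
  also have "\<dots> \<le> card (Rs \<times> {..<n})"
    by (rule card_mono[OF _ sub]) (simp add: Rs_def)
  also have "\<dots> = card Rs * n" by (simp add: card_cartesian_product)
  also have "\<dots> \<le> card ({1..norm1 c} \<times> {1..int d + 1}) * n"
    unfolding Rs_def by (intro mult_right_mono card_image_le) auto
  also have "\<dots> = nat (norm1 c) * (d + 1) * n" by (simp add: card_cartesian_product nat_add_distrib)
  finally have "N \<le> nat (norm1 c) * (d + 1) * n" .
  then have "int N \<le> int (nat (norm1 c) * (d + 1) * n)" by linarith
  also have "\<dots> = norm1 c * (int d + 1) * int n" using norm1_nonneg[of c] by (simp add: algebra_simps)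
  finally show ?thesis by (simp add: mult_ac)
qed

end

theorem corollary4:
  fixes A :: "int mat" and b c u :: "int vec" and d n N :: nat and xs :: "nat \<Rightarrow> int vec"
  assumes "A \<in> carrier_mat d n"
    and "totally_unimodular A"
    and "b \<in> carrier_vec d" and "c \<in> carrier_vec n" and "u \<in> carrier_vec n"
    and "\<forall>i<n. 0 \<le> u $ i"
    and "feasible A b u (xs 0)"
    and "\<forall>k<N. sd_step A b c u (xs k) (xs (Suc k))"
  shows "int N \<le> int n * (int d + 1) * norm1 c \<and>
         (sd_stops A b c u (xs N) \<longrightarrow> optimal A b c u (xs N))"
proof -
  have "\<forall>k. \<exists>p. k < N \<longrightarrow> (fst p \<in> graver A \<and> feasible A b u (xs k + fst p) \<and>
        (\<forall>z' \<in> graver A. feasible A b u (xs k + z') \<longrightarrow> ratio c z' \<le> ratio c (fst p)) \<and>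
        ratio c (fst p) > 0 \<and>
        feasible A b u (xs k + snd p \<cdot>\<^sub>v fst p) \<and>
        (\<forall>\<beta>::int. feasible A b u (xs k + \<beta> \<cdot>\<^sub>v fst p) \<longrightarrow> \<beta> \<le> snd p) \<and>
        xs (Suc k) = xs k + snd p \<cdot>\<^sub>v fst p)"
    using assms(8) unfolding sd_step_def by fastforce
  then obtain f where f: "\<And>k. k < N \<Longrightarrow> (fst (f k) \<in> graver A \<and> feasible A b u (xs k + fst (f k)) \<and>
        (\<forall>z' \<in> graver A. feasible A b u (xs k + z') \<longrightarrow> ratio c z' \<le> ratio c (fst (f k))) \<and>
        ratio c (fst (f k)) > 0 \<and>
        feasible A b u (xs k + snd (f k) \<cdot>\<^sub>v fst (f k)) \<and>
        (\<forall>\<beta>::int. feasible A b u (xs k + \<beta> \<cdot>\<^sub>v fst (f k)) \<longrightarrow> \<beta> \<le> snd (f k)) \<and>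
        xs (Suc k) = xs k + snd (f k) \<cdot>\<^sub>v fst (f k))"
    by metis
  interpret S: sdl A b c u d n N xs "\<lambda>k. fst (f k)" "\<lambda>k. snd (f k)"
  proof (unfold_locales)
    show "\<And>k. k < N \<Longrightarrow> fst (f k) \<in> graver A \<and> feasible A b u (xs k + fst (f k)) \<and>
        (\<forall>z' \<in> graver A. feasible A b u (xs k + z') \<longrightarrow> ratio c z' \<le> ratio c (fst (f k))) \<and>
        ratio c (fst (f k)) > 0 \<and>
        feasible A b u (xs k + snd (f k) \<cdot>\<^sub>v fst (f k)) \<and>
        (\<forall>\<beta>::int. feasible A b u (xs k + \<beta> \<cdot>\<^sub>v fst (f k)) \<longrightarrow> \<beta> \<le> snd (f k)) \<and>
        xs (Suc k) = xs k + snd (f k) \<cdot>\<^sub>v fst (f k)" using f by blast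
    show "\<And>k i. k < N \<Longrightarrow> i < n \<Longrightarrow> fst (f k) $ i \<in> {-1,0,1}"
      using f graver_TU[OF assms(1,2)] by blast
  qed (use assms in auto)
  have part1: "int N \<le> int n * (int d + 1) * norm1 c"
    using S.count f graver_TU[OF assms(1,2)] by blast
  have part2: "sd_stops A b c u (xs N) \<longrightarrow> optimal A b c u (xs N)"
  proof
    assume stops: "sd_stops A b c u (xs N)"
    have fN: "feasible A b u (xs N)" using S.feas by simp
    have xNc: "xs N \<in> carrier_vec n" using S.xc by simp
    show "optimal A b c u (xs N)" unfolding optimal_def
    proof (intro conjI allI impI fN)
      fix y assume fy: "feasible A b u y"
      have yc: "y \<in> carrier_vec n" using fy assms(1) by (auto simp: feasible_def)
      show "c \<bullet> xs N \<le> c \<bullet> y"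
      proof (rule ccontr)
        assume lt: "\<not> c \<bullet> xs N \<le> c \<bullet> y"
        define w where "w = y - xs N"
        have wc: "w \<in> carrier_vec n" using yc xNc by (simp add: w_def)
        have Aw: "A *\<^sub>v w = 0\<^sub>v d"
        proof -
          have "A *\<^sub>v w = A *\<^sub>v y - A *\<^sub>v xs N" unfolding w_def using mult_minus_distrib_mat_vec[OF assms(1) yc xNc] .
          also have "\<dots> = b - b" using fy fN by (simp add: feasible_def)
          also have "\<dots> = 0\<^sub>v d" using assms(3) by simp
          finally show ?thesis .
        qed
        have wk: "w \<in> int_kernel A" using wc Aw assms(1) by (simp add: int_kernel_def)
        have cw: "c \<bullet> w = c \<bullet> y - c \<bullet> xs N" unfolding w_def using scalar_prod_minus_distrib[OF assms(4) yc xNc] .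
        have "\<not> (- real_of_int (c \<bullet> w) \<le> 0 * real_of_int (norm1 w))" using cw lt by simp
        then obtain g where g: "g \<in> graver A" "g \<sqsubseteq> w" "\<not> (- real_of_int (c \<bullet> g) \<le> 0 * real_of_int (norm1 g))"
          using decomp_bound[OF wk _ , of 0 c] assms(1,4) by auto
        have gk: "g \<in> carrier_vec n" "A *\<^sub>v g = 0\<^sub>v d" "g \<noteq> 0\<^sub>v n"
          using graver_kernel[OF g(1)] assms(1) by (auto simp: int_kernel_def)
        have "xs N + w = y" using yc xNc by (intro eq_vecI) (auto simp: w_def)
        then have "feasible A b u (xs N + g)" using feas_conf[OF assms(1) fN _ g(2) gk(1,2)] fy by simp
        moreover have "ratio c g > 0" using g(3) norm1_pos[OF gk(1,3)]
          by (simp add: ratio_def divide_less_0_iff)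
        ultimately show False using stops g(1) unfolding sd_stops_def by blast
      qed
    qed
  qed
  show ?thesis using part1 part2 by blast
qed


end
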